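(* Let $f:2^{[n]}\to\mathbb{Z}$ be an integer-valued submodular function with $f(\emptyset)=0$ and $|f(S)|\le M$ for all $S\subseteq[n]$. Then for every $x\in[0,1]^n$, the Lovász subgradient $g(x)$ has at most $3M$ nonzero entries.
   Context: Notation: $[n]=\{1,\dots,n\}$. For a permutation $P=(P_1,\dots,P_n)$ of $[n]$, write $P[j]=\{P_1,\dots,P_j\}$ for $0\le j\le n$ (so $P[0]=\emptyset$). For $x\in\mathbb{R}^n$, the permutation $P_x$ consistent with $x$ is the permutation with $x_{P_1}\ge x_{P_2}\ge\dots\ge x_{P_n}$, ties broken lexicographically. The Lovász subgradient at $x$ is $g(x)\in\mathbb{R}^n$ with $g(x)_{P_k}=f(P[k])-f(P[k-1])$ for $k\in[n]$, where $P=P_x$. *)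

theory Defs
  imports Complex_Main
begin

definition consistent_perm :: "nat \<Rightarrow> (nat \<Rightarrow> real) \<Rightarrow> (nat \<Rightarrow> nat) \<Rightarrow> bool" where
  "consistent_perm n x P \<longleftrightarrow>
     bij_betw P {1..n} {1..n} \<and> (\<forall>k. k \<notin> {1..n} \<longrightarrow> P k = k) \<and>
     (\<forall>k\<in>{1..n}. \<forall>l\<in>{1..n}. k < l \<longrightarrow>
        (x (P k) > x (P l) \<or> (x (P k) = x (P l) \<and> P k < P l)))"

definition perm_of :: "nat \<Rightarrow> (nat \<Rightarrow> real) \<Rightarrow> (nat \<Rightarrow> nat)" where
  "perm_of n x = (THE P. consistent_perm n x P)"

definition lovasz_subgrad :: "nat \<Rightarrow> (nat set \<Rightarrow> int) \<Rightarrow> (nat \<Rightarrow> real) \<Rightarrow> nat \<Rightarrow> int" where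
  "lovasz_subgrad n f x i =
     (let P = perm_of n x; k = (THE k. k \<in> {1..n} \<and> P k = i)
      in f (P ` {1..k}) - f (P ` {1..k - 1}))"

definition submodular_on :: "nat set \<Rightarrow> (nat set \<Rightarrow> int) \<Rightarrow> bool" where
  "submodular_on V f \<longleftrightarrow>
     (\<forall>S T. S \<subseteq> V \<longrightarrow> T \<subseteq> V \<longrightarrow> f (S \<union> T) + f (S \<inter> T) \<le> f S + f T)"

end

theory Submission
  imports Defs
begin

definition relx :: "(nat \<Rightarrow> real) \<Rightarrow> nat \<Rightarrow> nat \<Rightarrow> bool" where
  "relx x i j \<longleftrightarrow> x i > x j \<or> (x i = x j \<and> i < j)"

definition rankx :: "nat \<Rightarrow> (nat \<Rightarrow> real) \<Rightarrow> nat \<Rightarrow> nat" where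
  "rankx n x i = card {j\<in>{1..n}. relx x j i} + 1"

lemma relx_irr: "\<not> relx x i i" by (auto simp: relx_def)
lemma relx_trans: "relx x i j \<Longrightarrow> relx x j l \<Longrightarrow> relx x i l" by (auto simp: relx_def)
lemma relx_asym: "relx x i j \<Longrightarrow> \<not> relx x j i" by (auto simp: relx_def)
lemma relx_total: "i \<noteq> j \<Longrightarrow> relx x i j \<or> relx x j i" by (auto simp: relx_def)

lemma rank_in: assumes "i \<in> {1..n}" shows "rankx n x i \<in> {1..n}"
proof -
  have "{j\<in>{1..n}. relx x j i} \<subseteq> {1..n} - {i}" using relx_irr by auto
  hence "card {j\<in>{1..n}. relx x j i} \<le> card ({1..n} - {i})" by (intro card_mono) auto
  also have "\<dots> = n - 1" using assms by simp
  finally show ?thesis using assms unfolding rankx_def by auto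
qed

lemma rank_less: assumes "relx x i j" "j \<in> {1..n}" "i \<in> {1..n}" shows "rankx n x i < rankx n x j"
proof -
  have "{l\<in>{1..n}. relx x l i} \<subset> {l\<in>{1..n}. relx x l j}"
    using assms relx_trans[of x _ i j] relx_irr[of x i] by auto
  hence "card {l\<in>{1..n}. relx x l i} < card {l\<in>{1..n}. relx x l j}"
    by (intro psubset_card_mono) auto
  thus ?thesis unfolding rankx_def by simp
qed

lemma rank_inj: "inj_on (rankx n x) {1..n}"
proof (rule inj_onI, rule ccontr)
  fix i j assume a: "i \<in> {1..n}" "j \<in> {1..n}" "rankx n x i = rankx n x j" "i \<noteq> j"
  then show False using relx_total[of i j x] rank_less[of x i j n] rank_less[of x j i n] by auto
qed

lemma rank_bij: "bij_betw (rankx n x) {1..n} {1..n}"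
proof -
  have s: "rankx n x ` {1..n} \<subseteq> {1..n}" using rank_in by auto
  have "card (rankx n x ` {1..n}) = card {1..n}" using rank_inj card_image by blast
  hence "rankx n x ` {1..n} = {1..n}" using s by (intro card_subset_eq) auto
  thus ?thesis using rank_inj unfolding bij_betw_def by auto
qed

lemma consistent_rank:
  assumes c: "consistent_perm n x Q" and k: "k \<in> {1..n}"
  shows "rankx n x (Q k) = k"
proof -
  have bq: "bij_betw Q {1..n} {1..n}" using c unfolding consistent_perm_def by blast
  have ord0: "\<forall>k\<in>{1..n}. \<forall>l\<in>{1..n}. k < l \<longrightarrow>
        (x (Q k) > x (Q l) \<or> (x (Q k) = x (Q l) \<and> Q k < Q l))"
    using c unfolding consistent_perm_def by blast
  have ord: "\<And>a b. a \<in> {1..n} \<Longrightarrow> b \<in> {1..n} \<Longrightarrow> a < b \<Longrightarrow> relx x (Q a) (Q b)"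
    unfolding relx_def using ord0 by blast
  have inj: "inj_on Q {1..n}" using bq bij_betw_imp_inj_on by blast
  have img: "Q ` {1..n} = {1..n}" using bq bij_betw_imp_surj_on by blast
  have Qin: "\<And>a. a \<in> {1..n} \<Longrightarrow> Q a \<in> {1..n}" using img by blast
  have "{j\<in>{1..n}. relx x j (Q k)} = Q ` {1..k-1}"
  proof
    show "Q ` {1..k-1} \<subseteq> {j\<in>{1..n}. relx x j (Q k)}"
    proof
      fix j assume "j \<in> Q ` {1..k-1}"
      then obtain l where l: "l \<in> {1..k-1}" "j = Q l" by blast
      have ln: "l \<in> {1..n}" "l < k" using k l(1) by auto
      have "relx x (Q l) (Q k)" by (rule ord[OF ln(1) k ln(2)])
      moreover have "Q l \<in> {1..n}" by (rule Qin[OF ln(1)])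
      ultimately show "j \<in> {j\<in>{1..n}. relx x j (Q k)}" using l(2) by blast
    qed
  next
    show "{j\<in>{1..n}. relx x j (Q k)} \<subseteq> Q ` {1..k-1}"
    proof
      fix j assume j: "j \<in> {j\<in>{1..n}. relx x j (Q k)}"
      hence "j \<in> Q ` {1..n}" using img by simp
      then obtain l where l: "l \<in> {1..n}" "j = Q l" by blast
      have r: "relx x (Q l) (Q k)" using j l(2) by simp
      have "l < k"
      proof (rule ccontr)
        assume "\<not> l < k"
        hence "l = k \<or> k < l" by linarith
        thus False
        proof
          assume "l = k" thus False using r relx_irr by metis
        next
          assume "k < l"
          hence "relx x (Q k) (Q l)" by (rule ord[OF k l(1)])
          thus False using r relx_asym by blast
        qed
      qed
      hence "l \<in> {1..k-1}" using l(1) by auto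
      thus "j \<in> Q ` {1..k-1}" using l(2) by blast
    qed
  qed
  moreover have "card (Q ` {1..k-1}) = k - 1"
  proof -
    have "inj_on Q {1..k-1}" using k by (intro inj_on_subset[OF inj]) auto
    thus ?thesis by (simp add: card_image)
  qed
  ultimately show ?thesis unfolding rankx_def using k by auto
qed

lemma perm_exists_unique: "\<exists>!P. consistent_perm n x P"
proof -
  define r where "r = rankx n x"
  define P where "P = (\<lambda>k. if k \<in> {1..n} then inv_into {1..n} r k else k)"
  have rb: "bij_betw r {1..n} {1..n}" unfolding r_def by (rule rank_bij)
  have ri: "inj_on r {1..n}" using rb bij_betw_imp_inj_on by blast
  have bi: "bij_betw (inv_into {1..n} r) {1..n} {1..n}"
    using rb by (rule bij_betw_inv_into)
  have eq: "\<And>k. k \<in> {1..n} \<Longrightarrow> P k = inv_into {1..n} r k" by (simp add: P_def)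
  have bP: "bij_betw P {1..n} {1..n}"
  proof -
    have "bij_betw P {1..n} {1..n} = bij_betw (inv_into {1..n} r) {1..n} {1..n}"
      by (rule bij_betw_cong) (rule eq)
    thus ?thesis using bi by simp
  qed
  have Pin: "\<And>k. k \<in> {1..n} \<Longrightarrow> P k \<in> {1..n}" by (rule bij_betw_apply[OF bP])
  have rP: "\<And>k. k \<in> {1..n} \<Longrightarrow> r (P k) = k"
  proof -
    fix k :: nat assume k: "k \<in> {1..n}"
    have "r (inv_into {1..n} r k) = k" by (rule bij_betw_inv_into_right[OF rb k])
    thus "r (P k) = k" using eq[OF k] by simp
  qed
  have cP: "consistent_perm n x P"
    unfolding consistent_perm_def
  proof (intro conjI ballI allI impI)
    show "bij_betw P {1..n} {1..n}" by (rule bP)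
  next
    fix k assume "k \<notin> {1..n}" thus "P k = k" unfolding P_def by (rule if_not_P)
  next
    fix k l assume kl: "k \<in> {1..n}" "l \<in> {1..n}" "k < l"
    have i1: "P k \<in> {1..n}" "P l \<in> {1..n}" using kl Pin by blast+
    have ne: "P k \<noteq> P l"
    proof
      assume "P k = P l"
      hence "r (P k) = r (P l)" by simp
      thus False using rP[OF kl(1)] rP[OF kl(2)] kl(3) by simp
    qed
    have "\<not> relx x (P l) (P k)"
    proof
      assume "relx x (P l) (P k)"
      hence "r (P l) < r (P k)" unfolding r_def by (rule rank_less[OF _ i1(1) i1(2)])
      thus False using rP[OF kl(1)] rP[OF kl(2)] kl(3) by simp
    qed
    hence "relx x (P k) (P l)" using relx_total ne by blast
    thus "x (P k) > x (P l) \<or> (x (P k) = x (P l) \<and> P k < P l)" by (simp add: relx_def)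
  qed
  show ?thesis
  proof (rule ex1I[of _ P])
    show "consistent_perm n x P" by (rule cP)
  next
    fix Q assume cQ: "consistent_perm n x Q"
    have bQ: "bij_betw Q {1..n} {1..n}" and oQ: "\<forall>k. k \<notin> {1..n} \<longrightarrow> Q k = k"
      using cQ unfolding consistent_perm_def by blast+
    show "Q = P"
    proof
      fix k
      show "Q k = P k"
      proof (cases "k \<in> {1..n}")
        case True
        have a1: "Q k \<in> {1..n}" by (rule bij_betw_apply[OF bQ True])
        have a2: "P k \<in> {1..n}" using True Pin by blast
        have "r (Q k) = r (P k)"
          using consistent_rank[OF cQ True] rP[OF True] unfolding r_def by simp
        thus ?thesis using ri a1 a2 unfolding inj_on_def by blast
      next
        case False
        have "Q k = k" using oQ False by blast
        moreover have "P k = k" unfolding P_def using False by (rule if_not_P)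
        ultimately show ?thesis by simp
      qed
    qed
  qed
qed

lemma count_bound:
  fixes P :: "nat \<Rightarrow> nat" and f :: "nat set \<Rightarrow> int" and M :: real
  assumes bij: "bij_betw P {1..n} {1..n}" and sub: "submodular_on {1..n} f" and f0: "f {} = 0"
    and bnd: "\<forall>S. S \<subseteq> {1..n} \<longrightarrow> \<bar>real_of_int (f S)\<bar> \<le> M"
  shows "real (card {k\<in>{1..n}. f (P`{1..k}) - f (P`{1..k-1}) \<noteq> 0}) \<le> 3*M"
proof -
  define d where "d k = f (P`{1..k}) - f (P`{1..k-1})" for k
  have inj: "inj_on P {1..n}" and img: "P ` {1..n} = {1..n}" using bij bij_betw_imp_inj_on bij_betw_imp_surj_on by blast+
  have subm: "m \<le> n \<Longrightarrow> P`{1..m} \<subseteq> {1..n}" for m using img by auto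
  have tele: "m \<le> n \<Longrightarrow> (\<Sum>k=1..m. d k) = f (P`{1..m})" for m
  proof (induction m)
    case 0 thus ?case using f0 by simp
  next
    case (Suc m) thus ?case by (simp add: d_def)
  qed
  define B where "B m = P ` {k\<in>{1..m}. d k > 0}" for m
  have pos: "m \<le> n \<Longrightarrow> (\<Sum>k=1..m. max (d k) 0) \<le> f (B m)" for m
  proof (induction m)
    case 0 thus ?case using f0 by (simp add: B_def)
  next
    case (Suc m)
    hence IH: "(\<Sum>k=1..m. max (d k) 0) \<le> f (B m)" by simp
    show ?case
    proof (cases "d (Suc m) > 0")
      case True
      have BS: "B (Suc m) = insert (P (Suc m)) (B m)" using True
        by (auto simp: B_def le_Suc_eq)
      have Bm: "B m \<subseteq> P`{1..m}" by (auto simp: B_def)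
      have PS: "P`{1..Suc m} = insert (P (Suc m)) (P`{1..m})"
        by (metis atLeastAtMostSuc_conv image_insert le_add1 plus_1_eq_Suc)
      have nin: "P (Suc m) \<notin> P`{1..m}"
      proof
        assume "P (Suc m) \<in> P`{1..m}"
        then obtain l where "l \<in> {1..m}" "P (Suc m) = P l" by auto
        moreover have "Suc m \<in> {1..n}" "l \<in> {1..n}" using Suc.prems \<open>l \<in> {1..m}\<close> by auto
        ultimately have "Suc m = l" using inj unfolding inj_on_def by blast
        thus False using \<open>l \<in> {1..m}\<close> by simp
      qed
      have U: "B (Suc m) \<union> P`{1..m} = P`{1..Suc m}" using BS Bm PS by auto
      have I: "B (Suc m) \<inter> P`{1..m} = B m" using BS Bm nin by auto
      have s1: "B (Suc m) \<subseteq> {1..n}" using BS Bm subm[of "Suc m"] PS Suc.prems by auto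
      have s2: "P`{1..m} \<subseteq> {1..n}" using subm Suc.prems by auto
      have "f (B (Suc m) \<union> P`{1..m}) + f (B (Suc m) \<inter> P`{1..m}) \<le> f (B (Suc m)) + f (P`{1..m})"
        using sub s1 s2 unfolding submodular_on_def by blast
      hence "d (Suc m) + f (B m) \<le> f (B (Suc m))" using U I by (simp add: d_def)
      thus ?thesis using IH True by simp
    next
      case False
      have "B (Suc m) = B m" using False by (auto simp: B_def le_Suc_eq)
      thus ?thesis using IH False by simp
    qed
  qed
  define S where "S = {k\<in>{1..n}. d k \<noteq> 0}"
  have "int (card S) = (\<Sum>k\<in>S. 1)" by simp
  also have "\<dots> \<le> (\<Sum>k\<in>S. \<bar>d k\<bar>)" by (intro sum_mono) (auto simp: S_def)
  also have "\<dots> \<le> (\<Sum>k=1..n. \<bar>d k\<bar>)" by (intro sum_mono2) (auto simp: S_def)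
  also have "\<dots> = (\<Sum>k=1..n. 2 * max (d k) 0 - d k)" by (intro sum.cong) auto
  also have "\<dots> = 2 * (\<Sum>k=1..n. max (d k) 0) - (\<Sum>k=1..n. d k)"
    by (simp add: sum_subtractf sum_distrib_left)
  also have "\<dots> \<le> 2 * f (B n) - f (P`{1..n})" using pos[of n] tele[of n] by simp
  finally have c: "int (card S) \<le> 2 * f (B n) - f (P`{1..n})" .
  have "B n \<subseteq> {1..n}" using img by (auto simp: B_def)
  hence "\<bar>real_of_int (f (B n))\<bar> \<le> M" using bnd by blast
  hence b1: "real_of_int (f (B n)) \<le> M" by (simp add: abs_le_iff)
  have "\<bar>real_of_int (f (P`{1..n}))\<bar> \<le> M" using bnd subm[of n] by blast
  hence b2: "- real_of_int (f (P`{1..n})) \<le> M" by (simp add: abs_le_iff)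
  have "real (card S) \<le> 2 * real_of_int (f (B n)) - real_of_int (f (P`{1..n}))"
  proof -
    have "real_of_int (int (card S)) \<le> real_of_int (2 * f (B n) - f (P`{1..n}))"
      using c by (simp only: of_int_le_iff)
    thus ?thesis by simp
  qed
  thus ?thesis using b1 b2 unfolding S_def d_def by linarith
qed

theorem lemma3p6:
  fixes n :: nat and f :: "nat set \<Rightarrow> int" and M :: real and x :: "nat \<Rightarrow> real"
  assumes "submodular_on {1..n} f"
    and "f {} = 0"
    and "\<forall>S. S \<subseteq> {1..n} \<longrightarrow> \<bar>real_of_int (f S)\<bar> \<le> M"
    and "\<forall>i\<in>{1..n}. 0 \<le> x i \<and> x i \<le> 1"
  shows "real (card {i \<in> {1..n}. lovasz_subgrad n f x i \<noteq> 0}) \<le> 3 * M"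
proof -
  define P where "P = perm_of n x"
  have "consistent_perm n x P" unfolding P_def perm_of_def
    by (rule theI'[OF perm_exists_unique])
  hence bij: "bij_betw P {1..n} {1..n}" unfolding consistent_perm_def by blast
  hence inj: "inj_on P {1..n}" and img: "P ` {1..n} = {1..n}" using bij_betw_imp_inj_on bij_betw_imp_surj_on by blast+
  define d where "d k = f (P`{1..k}) - f (P`{1..k-1})" for k
  have th: "k \<in> {1..n} \<Longrightarrow> (THE k'. k' \<in> {1..n} \<and> P k' = P k) = k" for k
  proof -
    assume k: "k \<in> {1..n}"
    show ?thesis
    proof (rule the_equality)
      show "k \<in> {1..n} \<and> P k = P k" using k by simp
    next
      fix k' assume "k' \<in> {1..n} \<and> P k' = P k"
      thus "k' = k" using inj k unfolding inj_on_def by blast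
    qed
  qed
  have L: "lovasz_subgrad n f x i = f (P ` {1..(THE k. k \<in> {1..n} \<and> P k = i)}) - f (P ` {1..(THE k. k \<in> {1..n} \<and> P k = i) - 1})" for i
    unfolding lovasz_subgrad_def P_def Let_def by (rule refl)
  have LP: "k \<in> {1..n} \<Longrightarrow> lovasz_subgrad n f x (P k) = d k" for k
    unfolding L d_def using th by simp
  have "{i \<in> {1..n}. lovasz_subgrad n f x i \<noteq> 0} = P ` {k\<in>{1..n}. d k \<noteq> 0}"
  proof
    show "{i \<in> {1..n}. lovasz_subgrad n f x i \<noteq> 0} \<subseteq> P ` {k\<in>{1..n}. d k \<noteq> 0}"
    proof
      fix i assume i: "i \<in> {i \<in> {1..n}. lovasz_subgrad n f x i \<noteq> 0}"
      hence "i \<in> P ` {1..n}" using img by simp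
      then obtain k where k: "k \<in> {1..n}" "i = P k" by blast
      hence "lovasz_subgrad n f x i = d k" using LP by simp
      thus "i \<in> P ` {k\<in>{1..n}. d k \<noteq> 0}" using i k by auto
    qed
  next
    show "P ` {k\<in>{1..n}. d k \<noteq> 0} \<subseteq> {i \<in> {1..n}. lovasz_subgrad n f x i \<noteq> 0}"
    proof
      fix i assume "i \<in> P ` {k\<in>{1..n}. d k \<noteq> 0}"
      then obtain k where k: "k \<in> {1..n}" "d k \<noteq> 0" "i = P k" by auto
      hence "lovasz_subgrad n f x i = d k" using LP by simp
      moreover have "i \<in> {1..n}" using k img by auto
      ultimately show "i \<in> {i \<in> {1..n}. lovasz_subgrad n f x i \<noteq> 0}" using k by auto
    qed
  qed
  moreover have "inj_on P {k\<in>{1..n}. d k \<noteq> 0}" by (rule inj_on_subset[OF inj]) blast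
  ultimately have "card {i \<in> {1..n}. lovasz_subgrad n f x i \<noteq> 0} = card {k\<in>{1..n}. d k \<noteq> 0}"
    by (simp add: card_image)
  thus ?thesis using count_bound[OF bij assms(1,2,3)] unfolding d_def by simp
qed

end
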